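(* Let $H$ be a Hermitian operator all of whose eigenvalues lie in $[0,1/2]$, let $L\ge4$ be an integer, $e_0$ real and $\Delta>1/\sqrt L$, set $\omega=\Delta-1/\sqrt L$, and assume $\omega<1$, $[e_0-\Delta/2,e_0+\Delta/2]\subseteq[0,1/2]$ and $(e_0\pm\omega/2)L\in\mathbb Z$. Then $\|Q(H)-\Pi_\Delta Q(H)\|\le\frac{2}{\sqrt L}$ (operator norm).
   Context: $\mathrm{sinc}_L(x)=\frac{\sin(\pi Lx)}{L\sin(\pi x)}$ (extended continuously to integers), and $Q(H)=\sum_{m=(e_0-\omega/2)L}^{(e_0+\omega/2)L}\mathrm{sinc}_L(H-m/L)^2$ (sum over consecutive integers). $\Pi_\Delta$ denotes the orthogonal projector onto the span of eigenvectors of $H$ with eigenvalue in $[e_0-\Delta/2,e_0+\Delta/2]$. *)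

theory Defs
  imports "HOL-Analysis.Analysis"
begin

definition adjoint :: "complex^'n^'n \<Rightarrow> complex^'n^'n" where
  "adjoint A = (\<chi> i j. cnj (A $ j $ i))"

definition hermitian :: "complex^'n^'n \<Rightarrow> bool" where
  "hermitian A \<longleftrightarrow> adjoint A = A"

definition opnorm :: "complex^'n^'n \<Rightarrow> real" where
  "opnorm A = onorm (\<lambda>x. A *v x)"

definition cspan :: "(complex^'n) set \<Rightarrow> (complex^'n) set" where
  "cspan S = {\<Sum>v\<in>T. c v *s v | T c. finite T \<and> T \<subseteq> S}"

definition mfun :: "(real \<Rightarrow> real) \<Rightarrow> complex^'n^'n \<Rightarrow> complex^'n^'n" where
  "mfun f H = (THE M. \<forall>v l. H *v v = complex_of_real l *s v
                         \<longrightarrow> M *v v = complex_of_real (f l) *s v)"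

definition PiD :: "complex^'n^'n \<Rightarrow> real \<Rightarrow> real \<Rightarrow> complex^'n^'n" where
  "PiD H e0 D = (THE P. P ** P = P \<and> adjoint P = P \<and>
      range (\<lambda>x. P *v x) = cspan {v. \<exists>l. e0 - D/2 \<le> l \<and> l \<le> e0 + D/2 \<and>
                                          H *v v = complex_of_real l *s v})"

text \<open>sinc_L(x) = sin(pi L x)/(L sin(pi x)), extended continuously to integers
  (where the limit is cos(pi L x)/cos(pi x)).\<close>
definition sincL :: "nat \<Rightarrow> real \<Rightarrow> real" where
  "sincL L x = (if x \<in> \<int> then cos (pi * real L * x) / cos (pi * x)
                else sin (pi * real L * x) / (real L * sin (pi * x)))"

definition Qfun :: "nat \<Rightarrow> real \<Rightarrow> real \<Rightarrow> real \<Rightarrow> real" where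
  "Qfun L e0 w x = (\<Sum>m\<in>{\<lceil>(e0 - w/2) * real L\<rceil>..\<lfloor>(e0 + w/2) * real L\<rfloor>}.
                      (sincL L (x - real_of_int m / real L))^2)"

end

theory Submission
  imports Defs
begin



definition cinner :: "complex^'n \<Rightarrow> complex^'n \<Rightarrow> complex" where
  "cinner x y = (\<Sum>i\<in>UNIV. cnj (x$i) * y$i)"

lemma cinner_add_right: "cinner x (y + z) = cinner x y + cinner x z"
  by (simp add: cinner_def distrib_left sum.distrib)
lemma cinner_diff_right: "cinner x (y - z) = cinner x y - cinner x z"
  by (simp add: cinner_def right_diff_distrib sum_subtractf)
lemma cinner_scale_right: "cinner x (c *s y) = c * cinner x y"
  by (simp add: cinner_def sum_distrib_left ac_simps)
lemma cinner_sum_right: "cinner x (\<Sum>b\<in>B. f b) = (\<Sum>b\<in>B. cinner x (f b))"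
  by (simp add: cinner_def sum_distrib_left) (intro allI sum.swap)
lemma cinner_zero_right[simp]: "cinner x 0 = 0" by (simp add: cinner_def)
lemma cinner_zero_left[simp]: "cinner 0 x = 0" by (simp add: cinner_def)
lemma cinner_commute: "cinner y x = cnj (cinner x y)"
  by (simp add: cinner_def ac_simps)
lemma cinner_add_left: "cinner (x + y) z = cinner x z + cinner y z"
  by (simp add: cinner_def distrib_right sum.distrib)
lemma cinner_diff_left: "cinner (x - y) z = cinner x z - cinner y z"
  by (simp add: cinner_def left_diff_distrib sum_subtractf)
lemma cinner_scale_left: "cinner (c *s x) y = cnj c * cinner x y"
  by (simp add: cinner_def sum_distrib_left ac_simps)
lemma cinner_sum_left: "cinner (\<Sum>b\<in>B. f b) x = (\<Sum>b\<in>B. cinner (f b) x)"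
  by (simp add: cinner_def sum_distrib_right) (rule sum.swap)

lemma norm_sq_vec: "(norm (x::complex^'n))^2 = (\<Sum>i\<in>UNIV. (cmod (x$i))^2)"
  by (simp add: norm_vec_def L2_set_def sum_nonneg)

lemma cinner_self: "cinner x x = complex_of_real ((norm x)^2)"
  unfolding cinner_def norm_sq_vec of_real_sum
  by (intro sum.cong refl) (subst complex_norm_square, rule mult.commute)

lemma cinner_self_eq0: "cinner x x = 0 \<longleftrightarrow> x = 0"
  by (simp add: cinner_self)

lemma inner_cinner: "inner x y = Re (cinner x y)"
  by (simp add: cinner_def inner_vec_def inner_complex_def Re_sum)

lemma cinner_adjoint: "cinner x (A *v y) = cinner (adjoint A *v x) y"
  apply (simp add: cinner_def adjoint_def matrix_vector_mult_def sum_distrib_left sum_distrib_right)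
  apply (subst sum.swap)
  apply (simp add: ac_simps)
  done

lemma mv_add: "A *v (x + y) = A *v x + A *v y"
  by (simp add: matrix_vector_right_distrib)
lemma mv_scale: "(A::complex^'n^'m) *v (c *s x) = c *s (A *v x)"
  by (simp add: vec_eq_iff matrix_vector_mult_def sum_distrib_left ac_simps)
lemma mv_sum: "(A::complex^'n^'m) *v (\<Sum>b\<in>B. f b) = (\<Sum>b\<in>B. A *v f b)"
  by (simp add: vec_eq_iff matrix_vector_mult_def sum_distrib_left) (intro allI sum.swap)
lemma mv_diff: "(A::complex^'n^'m) *v (x - y) = A *v x - A *v y"
  by (simp add: vec_eq_iff matrix_vector_mult_def right_diff_distrib sum_subtractf)

lemma adjoint_mult: "adjoint ((A::complex^'n^'n) ** B) = adjoint B ** adjoint A"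
  by (simp add: adjoint_def vec_eq_iff matrix_matrix_mult_def ac_simps)

lemma herm_sym: "hermitian H \<Longrightarrow> cinner x (H *v y) = cinner (H *v x) y"
  by (simp add: hermitian_def cinner_adjoint)




lemma eig_real:
  assumes "hermitian H" "H *v v = c *s v" "v \<noteq> 0"
  shows "c = complex_of_real (Re c)"
proof -
  have "c * cinner v v = cnj c * cinner v v"
    using herm_sym[OF assms(1), of v v] assms(2) by (simp add: cinner_scale_right cinner_scale_left)
  moreover have "cinner v v \<noteq> 0" using assms(3) cinner_self_eq0 by blast
  ultimately have "c = cnj c" by simp
  then show ?thesis by (metis Reals_cnj_iff complex_is_Real_iff of_real_Re)
qed

lemma eig_orth:
  assumes "hermitian H" "H *v b = complex_of_real l *s b" "H *v v = complex_of_real m *s v" "l \<noteq> m"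
  shows "cinner b v = 0"
proof -
  have "complex_of_real m * cinner b v = complex_of_real l * cinner b v"
    using herm_sym[OF assms(1), of b v] assms(2,3) by (simp add: cinner_scale_right cinner_scale_left)
  then show ?thesis using assms(4) by simp
qed

definition ONE :: "complex^'n^'n \<Rightarrow> (complex^'n) set \<Rightarrow> bool" where
  "ONE H B \<longleftrightarrow> finite B \<and> (\<forall>b\<in>B. cinner b b = 1) \<and> (\<forall>b\<in>B. \<forall>b'\<in>B. b \<noteq> b' \<longrightarrow> cinner b b' = 0)
     \<and> (\<forall>b\<in>B. \<exists>l::real. H *v b = complex_of_real l *s b)"

lemma ONE_card:
  fixes B :: "(complex^'n) set"
  assumes "ONE H B" shows "card B \<le> DIM(complex^'n)"
proof -
  have "pairwise orthogonal B"
    using assms by (auto simp: ONE_def pairwise_def orthogonal_def inner_cinner)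
  moreover have "0 \<notin> B" using assms by (auto simp: ONE_def)
  ultimately have "independent B" by (rule pairwise_orthogonal_independent)
  from independent_bound[OF this] show ?thesis by simp
qed

lemma cont_cinner: "continuous_on UNIV (\<lambda>x. cinner b x)"
  unfolding cinner_def by (intro continuous_intros)

lemma cont_F: "continuous_on UNIV (\<lambda>x. Re (cinner x ((H::complex^'n^'n) *v x)))"
  unfolding cinner_def matrix_vector_mult_def by (intro continuous_intros)




lemma Fscale: "cinner (complex_of_real c *s z) ((H::complex^'n^'n) *v (complex_of_real c *s z))
   = complex_of_real (c^2) * cinner z (H *v z)"
  by (simp add: mv_scale cinner_scale_left cinner_scale_right power2_eq_square)

lemma ofreal_smult: "complex_of_real c *s (z::complex^'n) = c *\<^sub>R z"
  by (simp add: vec_eq_iff) (simp add: scaleR_conv_of_real)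

lemma norm_ofreal_smult: "norm (complex_of_real c *s (z::complex^'n)) = \<bar>c\<bar> * norm z"
  by (simp add: ofreal_smult)

lemma herm_real_form:
  assumes "hermitian H" shows "cinner x (H *v x) = complex_of_real (Re (cinner x (H *v x)))"
proof -
  have "cinner x (H *v x) = cnj (cinner x (H *v x))"
    using herm_sym[OF assms, of x x] cinner_commute[of "H *v x" x] by simp
  then show ?thesis by (metis Reals_cnj_iff complex_is_Real_iff of_real_Re)
qed

lemma exists_eig_perp:
  fixes H :: "complex^'n^'n"
  assumes herm: "hermitian H" and one: "ONE H B" and w0: "w \<noteq> 0" and wB: "\<forall>b\<in>B. cinner b w = 0"
  shows "\<exists>x. cinner x x = 1 \<and> (\<forall>b\<in>B. cinner b x = 0) \<and> (\<exists>l::real. H *v x = complex_of_real l *s x)"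
proof -
  define W where "W = {x::complex^'n. \<forall>b\<in>B. cinner b x = 0}"
  define S where "S = W \<inter> sphere 0 1"
  define F where "F = (\<lambda>x. Re (cinner x (H *v x)))"
  have Wsub: "a + complex_of_real c *s z \<in> W" if "a \<in> W" "z \<in> W" for a z c
    using that by (simp add: W_def cinner_add_right cinner_scale_right)
  have Wscale: "complex_of_real c *s z \<in> W" if "z \<in> W" for z c
    using that by (simp add: W_def cinner_scale_right)
  have WH: "H *v z \<in> W" if "z \<in> W" for z
  proof -
    have "cinner b (H *v z) = 0" if "b \<in> B" for b
    proof -
      obtain l where l: "H *v b = complex_of_real l *s b" using one \<open>b\<in>B\<close> unfolding ONE_def by blast
      have "cinner b (H *v z) = cinner (H *v b) z" by (rule herm_sym[OF herm])
      also have "\<dots> = 0" using l \<open>z\<in>W\<close> \<open>b\<in>B\<close> by (simp add: cinner_scale_left W_def)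
      finally show ?thesis .
    qed
    then show ?thesis by (simp add: W_def)
  qed
  have "closed W"
  proof -
    have "W = (\<Inter>b\<in>B. {x. cinner b x = 0})" by (auto simp: W_def)
    moreover have "closed {x. cinner b x = 0}" for b
      by (rule closed_Collect_eq) (auto intro: cont_cinner continuous_intros)
    ultimately show ?thesis by auto
  qed
  then have "compact S" unfolding S_def by (simp add: closed_Int_compact)
  have nw: "norm w \<noteq> 0" using w0 by simp
  define cw where "cw = 1 / norm w"
  have "complex_of_real cw *s w \<in> W" using Wscale[of w] wB by (simp add: W_def)
  moreover have "norm (complex_of_real cw *s w) = 1"
    unfolding norm_ofreal_smult using nw by (simp add: cw_def)
  ultimately have "complex_of_real cw *s w \<in> S" by (simp add: S_def)
  then have "S \<noteq> {}" by blast
  have "continuous_on S F" unfolding F_def using cont_F continuous_on_subset by blast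
  then obtain x where xS: "x \<in> S" and xmax: "\<And>y. y \<in> S \<Longrightarrow> F y \<le> F x"
    using continuous_attains_sup[OF \<open>compact S\<close> \<open>S \<noteq> {}\<close>] by blast
  define \<mu> where "\<mu> = F x"
  define y where "y = H *v x - complex_of_real \<mu> *s x"
  have xW: "x \<in> W" using xS by (simp add: S_def)
  have nx: "norm x = 1" using xS by (simp add: S_def)
  have xx: "cinner x x = 1" using nx by (simp add: cinner_self)
  have xHx: "cinner x (H *v x) = complex_of_real \<mu>"
    using herm_real_form[OF herm, of x] by (simp add: \<mu>_def F_def)
  have yW: "y \<in> W" unfolding y_def
    using Wsub[OF WH[OF xW] xW, of "-\<mu>"] by (simp add: scalar_mult_eq_scaleR)
  have Hx: "H *v x = y + complex_of_real \<mu> *s x" by (simp add: y_def)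
  have xy: "cinner x y = 0" using xHx xx by (simp add: y_def cinner_diff_right cinner_scale_right)
  have yx: "cinner y x = 0" using xy cinner_commute[of x y] by simp
  have yHx: "cinner y (H *v x) = cinner y y"
    by (simp add: Hx cinner_add_right cinner_scale_right yx)
  have xHy: "cinner x (H *v y) = cinner y y"
    by (simp add: herm_sym[OF herm] Hx cinner_add_left cinner_scale_left xy)
  define n where "n = Re (cinner y y)"
  define r where "r = Re (cinner y (H *v y))"
  have n_eq: "cinner y y = complex_of_real n" by (simp add: n_def cinner_self)
  have key: "2 * n \<le> e * (\<mu> * n - r)" if e: "e > 0" for e
  proof -
    define z where "z = x + complex_of_real e *s y"
    have zW: "z \<in> W" unfolding z_def using Wsub[OF xW yW] .
    have zz: "cinner z z = complex_of_real (1 + e^2 * n)"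
      by (simp add: z_def cinner_add_left cinner_add_right cinner_scale_left cinner_scale_right
           xx xy yx n_eq power2_eq_square)
    have Fz: "F z = \<mu> + 2 * e * n + e^2 * r"
      by (simp add: F_def z_def mv_add mv_scale cinner_add_left cinner_add_right cinner_scale_left
           cinner_scale_right xHx xHy yHx n_eq r_def power2_eq_square algebra_simps)
    have nn: "n \<ge> 0" by (simp add: n_def cinner_self)
    have "complex_of_real ((norm z)^2) = complex_of_real (1 + e^2 * n)"
      using zz by (simp only: cinner_self)
    then have nz: "(norm z)^2 = 1 + e^2 * n" by (simp only: of_real_eq_iff)
    have nzpos: "norm z > 0"
    proof -
      have "(norm z)^2 > 0" using nz nn by (simp add: add_pos_nonneg)
      then show ?thesis by (simp add: zero_less_power2)
    qed
    define cz where "cz = 1 / norm z"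
    define z' where "z' = complex_of_real cz *s z"
    have "norm z' = 1" unfolding z'_def norm_ofreal_smult using nzpos by (simp add: cz_def)
    then have "z' \<in> S" using Wscale[OF zW] by (simp add: z'_def S_def)
    then have "F z' \<le> \<mu>" using xmax \<mu>_def by blast
    moreover have "F z' = F z / (norm z)^2"
      unfolding z'_def F_def Fscale by (simp add: cz_def power_divide)
    ultimately have "F z \<le> \<mu> * (norm z)^2" using nzpos by (simp add: divide_le_eq)
    then have "\<mu> + 2 * e * n + e^2 * r \<le> \<mu> * (1 + e^2 * n)" using Fz nz by simp
    then have "e * (2 * n) \<le> e * (e * (\<mu> * n - r))" by (simp add: algebra_simps power2_eq_square)
    then show ?thesis using e by simp
  qed
  have "n = 0"
  proof (rule ccontr)
    assume "n \<noteq> 0"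
    moreover have "n \<ge> 0" by (simp add: n_def cinner_self)
    ultimately have npos: "n > 0" by simp
    define K where "K = \<mu> * n - r"
    define e where "e = n / (\<bar>K\<bar> + 1)"
    have epos: "e > 0" using npos by (simp add: e_def)
    have "2 * n \<le> e * K" using key[OF epos] by (simp add: K_def)
    also have "e * K \<le> e * \<bar>K\<bar>" using epos by (simp add: mult_left_mono)
    also have "e * \<bar>K\<bar> < n" using npos by (simp add: e_def field_simps)
    finally show False using npos by simp
  qed
  then have "cinner y y = 0" using n_eq by simp
  then have "y = 0" using cinner_self_eq0 by blast
  then have "H *v x = complex_of_real \<mu> *s x" by (simp add: Hx)
  then show ?thesis using xx xW by (auto simp: W_def)
qed




lemma smult_sum: "(c::complex) *s (\<Sum>b\<in>B. f b) = (\<Sum>b\<in>B. c *s f b)"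
  by (simp add: vec_eq_iff sum_distrib_left)

lemma ONE_coef:
  assumes "ONE H B" "b' \<in> B"
  shows "cinner b' (\<Sum>b\<in>B. c b *s b) = c b'"
proof -
  have "cinner b' (\<Sum>b\<in>B. c b *s b) = (\<Sum>b\<in>B. c b * cinner b' b)"
    by (simp add: cinner_sum_right cinner_scale_right)
  also have "\<dots> = (\<Sum>b\<in>B. if b = b' then c b else 0)"
    using assms unfolding ONE_def by (intro sum.cong refl) auto
  also have "\<dots> = c b'" using assms by (simp add: ONE_def)
  finally show ?thesis .
qed

lemma eigenbasis:
  fixes H :: "complex^'n^'n"
  assumes herm: "hermitian H"
  shows "\<exists>B. ONE H B \<and> (\<forall>x. x = (\<Sum>b\<in>B. cinner b x *s b))"
proof -
  have "ONE H {}" by (simp add: ONE_def)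
  moreover have "\<forall>B. ONE H B \<longrightarrow> card B < Suc DIM(complex^'n)"
    using ONE_card less_Suc_eq_le by blast
  ultimately obtain B where one: "ONE H B" and bmax: "\<And>B'. ONE H B' \<Longrightarrow> card B' \<le> card B"
    using ex_has_greatest_nat[of "ONE H" "{}" card "Suc DIM(complex^'n)"] by blast
  have "x = (\<Sum>b\<in>B. cinner b x *s b)" for x
  proof (rule ccontr)
    assume ne: "x \<noteq> (\<Sum>b\<in>B. cinner b x *s b)"
    define r where "r = x - (\<Sum>b\<in>B. cinner b x *s b)"
    have r0: "r \<noteq> 0" using ne by (simp add: r_def)
    have rB: "\<forall>b\<in>B. cinner b r = 0"
      using ONE_coef[OF one] by (simp add: r_def cinner_diff_right)
    obtain y where yy: "cinner y y = 1" and yB: "\<forall>b\<in>B. cinner b y = 0"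
        and yl: "\<exists>l::real. H *v y = complex_of_real l *s y"
      using exists_eig_perp[OF herm one r0 rB] by blast
    have ynB: "y \<notin> B" using yy yB by fastforce
    have fin: "finite B" using one by (simp add: ONE_def)
    have yB': "\<forall>b\<in>B. cinner y b = 0"
    proof
      fix b assume "b \<in> B"
      have "cinner y b = cnj (cinner b y)" by (rule cinner_commute)
      then show "cinner y b = 0" using yB \<open>b \<in> B\<close> by simp
    qed
    have "ONE H (insert y B)"
      using one yy yB yB' yl unfolding ONE_def by auto
    then have "card (insert y B) \<le> card B" by (rule bmax)
    then show False using ynB fin by simp
  qed
  then show ?thesis using one by blast
qed

definition opB :: "(complex^'n) set \<Rightarrow> (complex^'n \<Rightarrow> real) \<Rightarrow> complex^'n^'n" where
  "opB B g = (\<chi> i j. \<Sum>b\<in>B. complex_of_real (g b) * b$i * cnj (b$j))"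

lemma opB_mv: "opB B g *v x = (\<Sum>b\<in>B. (complex_of_real (g b) * cinner b x) *s b)"
  apply (simp add: vec_eq_iff opB_def matrix_vector_mult_def cinner_def sum_distrib_left sum_distrib_right)
  apply (intro allI)
  apply (subst sum.swap)
  apply (simp add: ac_simps)
  done

lemma opB_mult:
  assumes "ONE H B"
  shows "opB B g ** opB B h = opB B (\<lambda>b. g b * h b)"
  unfolding matrix_eq
proof
  fix x
  have "(opB B g ** opB B h) *v x = opB B g *v (opB B h *v x)"
    by (simp add: matrix_vector_mul_assoc)
  also have "\<dots> = (\<Sum>b\<in>B. (complex_of_real (g b) * (complex_of_real (h b) * cinner b x)) *s b)"
    unfolding opB_mv[of B g] opB_mv[of B h] using ONE_coef[OF assms] by simp
  also have "\<dots> = opB B (\<lambda>b. g b * h b) *v x"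
    by (simp add: opB_mv mult.assoc)
  finally show "(opB B g ** opB B h) *v x = opB B (\<lambda>b. g b * h b) *v x" .
qed

lemma opB_diff: "opB B g - opB B h = opB B (\<lambda>b. g b - h b)"
  by (simp add: vec_eq_iff opB_def sum_subtractf algebra_simps)

lemma opB_adj: "adjoint (opB B g) = opB B g"
  by (simp add: vec_eq_iff opB_def adjoint_def ac_simps)

lemma ONE_pyth:
  assumes "ONE H B"
  shows "(norm (\<Sum>b\<in>B. c b *s b))^2 = (\<Sum>b\<in>B. (cmod (c b))^2)"
proof -
  have "cinner (\<Sum>b\<in>B. c b *s b) (\<Sum>b\<in>B. c b *s b) = (\<Sum>b\<in>B. cnj (c b) * c b)"
    by (simp add: cinner_sum_left cinner_scale_left ONE_coef[OF assms])
  also have "\<dots> = complex_of_real (\<Sum>b\<in>B. (cmod (c b))^2)"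
    unfolding of_real_sum by (intro sum.cong refl) (subst complex_norm_square, rule mult.commute)
  finally show ?thesis unfolding cinner_self of_real_eq_iff .
qed

lemma opB_norm:
  assumes one: "ONE H B" and exp: "\<And>x. x = (\<Sum>b\<in>B. cinner b x *s b)"
    and bd: "\<And>b. b \<in> B \<Longrightarrow> \<bar>g b\<bar> \<le> C" and C: "C \<ge> 0"
  shows "norm (opB B g *v x) \<le> C * norm x"
proof -
  have "(norm (opB B g *v x))^2 = (\<Sum>b\<in>B. (cmod (complex_of_real (g b) * cinner b x))^2)"
    unfolding opB_mv by (rule ONE_pyth[OF one])
  also have "\<dots> \<le> (\<Sum>b\<in>B. C^2 * (cmod (cinner b x))^2)"
  proof (intro sum_mono)
    fix b assume "b \<in> B"
    have "\<bar>g b\<bar>^2 \<le> C^2" using power_mono[OF bd[OF \<open>b\<in>B\<close>] abs_ge_zero[of "g b"], of 2] by simp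
    then show "(cmod (complex_of_real (g b) * cinner b x))^2 \<le> C^2 * (cmod (cinner b x))^2"
      by (simp add: norm_mult power_mult_distrib mult_right_mono)
  qed
  also have "\<dots> = C^2 * (norm x)^2"
    using ONE_pyth[OF one, of "\<lambda>b. cinner b x"] exp[of x] by (simp add: sum_distrib_left)
  also have "\<dots> = (C * norm x)^2" by (simp add: power_mult_distrib)
  finally show ?thesis using C by (simp add: power2_le_iff_abs_le)
qed




lemma proj_unique:
  fixes P P' :: "complex^'n^'n"
  assumes "P ** P = P" "adjoint P = P" "P' ** P' = P'" "adjoint P' = P'"
    and "range (\<lambda>x. P *v x) = range (\<lambda>x. P' *v x)"
  shows "P = P'"
proof -
  have fix1: "A ** B = B" if A1: "A ** A = A" and A2: "range (\<lambda>x. B *v x) \<subseteq> range (\<lambda>x. A *v x)"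
    for A B :: "complex^'n^'n"
    unfolding matrix_eq
  proof
    fix x
    obtain z where z: "B *v x = A *v z" using A2 by blast
    have "(A ** B) *v x = A *v (A *v z)" by (simp add: matrix_vector_mul_assoc[symmetric] z)
    also have "\<dots> = A *v z" by (simp add: matrix_vector_mul_assoc A1)
    finally show "(A ** B) *v x = B *v x" using z by simp
  qed
  have 1: "P ** P' = P'" using fix1[OF assms(1)] assms(5) by simp
  have 2: "P' ** P = P" using fix1[OF assms(3)] assms(5) by simp
  have "P' = adjoint (P ** P')" using 1 assms(4) by simp
  also have "\<dots> = P' ** P" by (simp add: adjoint_mult assms(2,4))
  also have "\<dots> = P" by (rule 2)
  finally show ?thesis by simp
qed

context
  fixes H :: "complex^'n^'n" and B and lam
  assumes herm: "hermitian H" and one: "ONE H B" and exp: "\<And>x. x = (\<Sum>b\<in>B. cinner b x *s b)"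
    and lam: "\<And>b. b \<in> B \<Longrightarrow> H *v b = complex_of_real (lam b) *s b"
begin

lemma opB_eig:
  assumes v: "H *v v = complex_of_real l *s v"
    and g: "\<And>b. b \<in> B \<Longrightarrow> lam b = l \<Longrightarrow> g b = c"
  shows "opB B g *v v = complex_of_real c *s v"
proof -
  have "opB B g *v v = (\<Sum>b\<in>B. complex_of_real c *s (cinner b v *s b))"
    unfolding opB_mv
  proof (intro sum.cong refl)
    fix b assume b: "b \<in> B"
    show "(complex_of_real (g b) * cinner b v) *s b = complex_of_real c *s (cinner b v *s b)"
    proof (cases "lam b = l")
      case True then show ?thesis using g[OF b] by (simp add: vector_smult_assoc)
    next
      case False
      then have "cinner b v = 0" using eig_orth[OF herm lam[OF b] v] by blast
      then show ?thesis by simp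
    qed
  qed
  also have "\<dots> = complex_of_real c *s (\<Sum>b\<in>B. cinner b v *s b)" by (simp only: smult_sum)
  also have "\<dots> = complex_of_real c *s v" by (rule arg_cong[where f = "\<lambda>z. complex_of_real c *s z"], rule exp[symmetric])
  finally show ?thesis .
qed

lemma mfun_eq: "mfun f H = opB B (\<lambda>b. f (lam b))"
  unfolding mfun_def
proof (rule the_equality)
  show "\<forall>v l. H *v v = complex_of_real l *s v \<longrightarrow> opB B (\<lambda>b. f (lam b)) *v v = complex_of_real (f l) *s v"
  proof (intro allI impI)
    fix v l assume "H *v v = complex_of_real l *s v"
    then show "opB B (\<lambda>b. f (lam b)) *v v = complex_of_real (f l) *s v"
      by (rule opB_eig) simp
  qed
next
  fix M assume M: "\<forall>v l. H *v v = complex_of_real l *s v \<longrightarrow> M *v v = complex_of_real (f l) *s v"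
  show "M = opB B (\<lambda>b. f (lam b))"
    unfolding matrix_eq
  proof
    fix x
    have "M *v x = M *v (\<Sum>b\<in>B. cinner b x *s b)" using exp[of x] by simp
    also have "\<dots> = (\<Sum>b\<in>B. cinner b x *s (M *v b))" by (simp add: mv_sum mv_scale)
    also have "\<dots> = (\<Sum>b\<in>B. (complex_of_real (f (lam b)) * cinner b x) *s b)"
    proof (intro sum.cong refl)
      fix b assume b: "b \<in> B"
      have "M *v b = complex_of_real (f (lam b)) *s b" using M lam[OF b] by blast
      then show "cinner b x *s (M *v b) = (complex_of_real (f (lam b)) * cinner b x) *s b"
        by (simp add: mult.commute)
    qed
    also have "\<dots> = opB B (\<lambda>b. f (lam b)) *v x" by (simp add: opB_mv)
    finally show "M *v x = opB B (\<lambda>b. f (lam b)) *v x" .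
  qed
qed

lemma PiD_eq:
  "PiD H e0 D = opB B (\<lambda>b. if e0 - D/2 \<le> lam b \<and> lam b \<le> e0 + D/2 then 1 else 0)"
proof -
  define g where "g = (\<lambda>b. if e0 - D/2 \<le> lam b \<and> lam b \<le> e0 + D/2 then 1 else (0::real))"
  define E where "E = {v. \<exists>l. e0 - D/2 \<le> l \<and> l \<le> e0 + D/2 \<and> H *v v = complex_of_real l *s v}"
  define P where "P = opB B g"
  have fin: "finite B" using one by (simp add: ONE_def)
  have gg: "(\<lambda>b. g b * g b) = g" by (auto simp: g_def)
  have PP: "P ** P = P" unfolding P_def opB_mult[OF one] gg ..
  have PA: "adjoint P = P" unfolding P_def by (rule opB_adj)
  have fixE: "P *v v = v" if vE: "v \<in> E" for v
  proof -
    obtain l where l: "e0 - D/2 \<le> l" "l \<le> e0 + D/2" "H *v v = complex_of_real l *s v"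
      using vE unfolding E_def by blast
    have "P *v v = complex_of_real 1 *s v"
      unfolding P_def by (rule opB_eig[OF l(3)]) (use l in \<open>simp add: g_def\<close>)
    then show ?thesis by simp
  qed
  have rng: "range (\<lambda>x. P *v x) = cspan E"
  proof
    show "range (\<lambda>x. P *v x) \<subseteq> cspan E"
    proof
      fix y assume "y \<in> range (\<lambda>x. P *v x)"
      then obtain x where y: "y = P *v x" by blast
      define T where "T = {b\<in>B. e0 - D/2 \<le> lam b \<and> lam b \<le> e0 + D/2}"
      have "y = (\<Sum>b\<in>B. (complex_of_real (g b) * cinner b x) *s b)" by (simp add: y P_def opB_mv)
      also have "\<dots> = (\<Sum>b\<in>B. if e0 - D/2 \<le> lam b \<and> lam b \<le> e0 + D/2 then cinner b x *s b else 0)"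
        by (intro sum.cong refl) (simp add: g_def)
      also have "\<dots> = (\<Sum>b\<in>T. cinner b x *s b)"
        unfolding T_def using fin by (simp add: sum.inter_filter)
      finally have "y = (\<Sum>b\<in>T. cinner b x *s b)" .
      moreover have "finite T" "T \<subseteq> E" using fin lam by (auto simp: T_def E_def)
      ultimately have "\<exists>T' c. y = (\<Sum>v\<in>T'. c v *s v) \<and> finite T' \<and> T' \<subseteq> E"
        by (intro exI[where x=T] exI[where x="\<lambda>b. cinner b x"]) simp
      then show "y \<in> cspan E" by (simp add: cspan_def)
    qed
  next
    show "cspan E \<subseteq> range (\<lambda>x. P *v x)"
    proof
      fix y assume "y \<in> cspan E"
      then obtain T c where y: "y = (\<Sum>v\<in>T. c v *s v)" and T: "finite T" "T \<subseteq> E"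
        unfolding cspan_def by blast
      have "P *v y = (\<Sum>v\<in>T. c v *s (P *v v))" by (simp add: y mv_sum mv_scale)
      also have "\<dots> = y" unfolding y using T fixE by (intro sum.cong refl) auto
      finally show "y \<in> range (\<lambda>x. P *v x)" by (metis rangeI)
    qed
  qed
  have "PiD H e0 D = P"
    unfolding PiD_def E_def[symmetric]
  proof (rule the_equality)
    show "P ** P = P \<and> adjoint P = P \<and> range (\<lambda>x. P *v x) = cspan E"
      using PP PA rng by simp
  next
    fix P' assume "P' ** P' = P' \<and> adjoint P' = P' \<and> range (\<lambda>x. P' *v x) = cspan E"
    then show "P' = P" using proj_unique[of P' P] PP PA rng by simp
  qed
  then show ?thesis by (simp add: P_def g_def)
qed

end




lemma sin_lower:
  fixes y :: real assumes y: "0 \<le> y" "y \<le> 1/2"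
  shows "7/4 * y \<le> sin (pi * y)"
proof -
  define t where "t = pi * y"
  have t0: "0 \<le> t" using y by (simp add: t_def)
  have "\<bar>sin t - (\<Sum>m<3. sin_coeff m * t ^ m)\<bar> \<le> inverse (fact 3) * \<bar>t\<bar> ^ 3"
    by (rule Maclaurin_sin_bound)
  moreover have "(\<Sum>m<3. sin_coeff m * t ^ m) = t"
    by (simp add: sin_coeff_def numeral_3_eq_3 lessThan_Suc)
  moreover have "inverse (fact 3 :: real) = 1/6"
    by (simp add: numeral_3_eq_3)
  ultimately have "\<bar>sin t - t\<bar> \<le> 1/6 * \<bar>t\<bar> ^ 3" by simp
  then have "\<bar>sin t - t\<bar> \<le> t^3 / 6" using t0 by simp
  then have s1: "t - t^3/6 \<le> sin t" by linarith
  have p1a: "3.14159 \<le> pi" using pi_approx(1) by simp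
  have p1b: "pi \<le> 3.1416" using pi_approx(2) by simp
  note p1 = p1a p1b
  have "pi^3 \<le> 3.1416^3" using p1 pi_gt_zero by (intro power_mono) auto
  moreover have "(3.1416::real)^3 \<le> 31.01" by (simp add: power3_eq_cube)
  ultimately have p3: "pi^3 \<le> 31.01" by linarith
  have yy: "y^2 \<le> 1/4" using y power_mono[of y "1/2" 2] by (simp add: power2_eq_square)
  have "pi^3 * y^2 \<le> 31.01 * (1/4)"
    using mult_mono[OF p3 yy] by simp
  then have "7/4 \<le> pi - pi^3 * y^2 / 6" using p1 by simp
  then have "7/4 * y \<le> (pi - pi^3 * y^2 / 6) * y" by (rule mult_right_mono[OF _ y(1)])
  also have "\<dots> = t - t^3/6" by (simp add: t_def power_mult_distrib algebra_simps power3_eq_cube power2_eq_square)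
  finally show ?thesis using s1 by (simp add: t_def)
qed

lemma abs_sin_lower:
  fixes x :: real assumes "\<bar>x\<bar> \<le> 1/2"
  shows "7/4 * \<bar>x\<bar> \<le> \<bar>sin (pi * x)\<bar>"
proof (cases "x \<ge> 0")
  case True
  then have "7/4 * x \<le> sin (pi * x)" using assms sin_lower by simp
  then show ?thesis using True by simp
next
  case False
  then have "7/4 * (-x) \<le> sin (pi * (-x))" using assms sin_lower[of "-x"] by simp
  then show ?thesis using False by simp
qed

lemma sinc_bound:
  assumes L: "L > 0" and x0: "x \<noteq> 0" and x2: "\<bar>x\<bar> \<le> 1/2"
  shows "(sincL L x)^2 \<le> 1 / (3 * (real L * x)^2)"
proof -
  have nint: "x \<notin> \<int>"
  proof
    assume "x \<in> \<int>"
    then obtain k where k: "x = of_int k" by (metis Ints_cases)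
    then have "k \<noteq> 0" using x0 by simp
    then have "\<bar>k\<bar> \<ge> 1" by simp
    then have "\<bar>x\<bar> \<ge> 1" using k by (metis of_int_1_le_iff of_int_abs)
    then show False using x2 by simp
  qed
  define u where "u = \<bar>sin (pi * x)\<bar>"
  have u: "7/4 * \<bar>x\<bar> \<le> u" using abs_sin_lower[OF x2] by (simp add: u_def)
  have xpos: "\<bar>x\<bar> > 0" using x0 by simp
  have upos: "u > 0" using u xpos by linarith
  have Lp: "real L > 0" using L by simp
  have "(sincL L x)^2 = (sin (pi * real L * x))^2 / (real L^2 * u^2)"
    using nint by (simp add: sincL_def u_def power_divide power_mult_distrib)
  also have "\<dots> \<le> 1 / (real L^2 * u^2)"
    using upos Lp by (intro divide_right_mono) (auto simp: abs_square_le_1)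
  also have "\<dots> \<le> 1 / (real L^2 * (7/4 * \<bar>x\<bar>)^2)"
  proof -
    have "(7/4 * \<bar>x\<bar>)^2 \<le> u^2" using u xpos by (intro power_mono) auto
    then have "real L^2 * (7/4 * \<bar>x\<bar>)^2 \<le> real L^2 * u^2" by (simp add: mult_left_mono)
    moreover have "real L^2 * (7/4 * \<bar>x\<bar>)^2 > 0" using xpos Lp by simp
    ultimately show ?thesis by (intro divide_left_mono) auto
  qed
  also have "\<dots> \<le> 1 / (3 * (real L * x)^2)"
  proof -
    have w: "real L^2 * x^2 \<ge> 0" by simp
    have "(7/4 * \<bar>x\<bar>)^2 = (7/4)^2 * \<bar>x\<bar>^2" by (rule power_mult_distrib)
    also have "\<dots> = 49/16 * x^2" by (simp add: power2_eq_square)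
    finally have "(7/4 * \<bar>x\<bar>)^2 = 49/16 * x^2" .
    then have "real L^2 * (7/4 * \<bar>x\<bar>)^2 = 49/16 * (real L^2 * x^2)" by simp
    moreover have "3 * (real L * x)^2 = 3 * (real L^2 * x^2)" by (simp add: power_mult_distrib)
    ultimately have "3 * (real L * x)^2 \<le> real L^2 * (7/4 * \<bar>x\<bar>)^2" using w by linarith
    moreover have "3 * (real L * x)^2 > 0" using xpos Lp by simp
    ultimately show ?thesis by (intro divide_left_mono) auto
  qed
  finally show ?thesis .
qed

lemma tele_up:
  fixes t :: real assumes t: "t > 0"
  shows "(\<Sum>m\<in>{c - int n..c}. 1 / (t + real_of_int (c - m))^2) \<le> 1/t^2 + 1/t - 1/(t + real n)"
proof (induction n)
  case 0
  then show ?case using t by simp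
next
  case (Suc n)
  have eq: "{c - int (Suc n)..c} = insert (c - int (Suc n)) {c - int n..c}" by auto
  have "(\<Sum>m\<in>{c - int (Suc n)..c}. 1 / (t + real_of_int (c - m))^2)
      = 1 / (t + real (Suc n))^2 + (\<Sum>m\<in>{c - int n..c}. 1 / (t + real_of_int (c - m))^2)"
    unfolding eq by (subst sum.insert) auto
  also have "\<dots> \<le> 1 / (t + real (Suc n))^2 + (1/t^2 + 1/t - 1/(t + real n))"
    using Suc.IH by simp
  also have "\<dots> \<le> 1/t^2 + 1/t - 1/(t + real (Suc n))"
  proof -
    define a where "a = t + real n"
    have a: "a > 0" using t by (simp add: a_def)
    have e1: "1/a - 1/(a+1) = 1 / (a * (a+1))" using a by (simp add: field_simps)
    have "a * (a+1) \<le> (a+1)^2" using a by (simp add: power2_eq_square)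
    then have "1 / (a + 1)^2 \<le> 1 / (a * (a+1))" using a by (intro divide_left_mono) auto
    then have "1 / (a + 1)^2 \<le> 1/a - 1/(a+1)" using e1 by simp
    moreover have ts: "t + real (Suc n) = a + 1" by (simp add: a_def)
    moreover have ta: "t + real n = a" by (simp add: a_def)
    ultimately show ?thesis by (simp only: ts ta)
  qed
  finally show ?case .
qed

lemma tele_down:
  fixes t :: real assumes t: "t > 0"
  shows "(\<Sum>m\<in>{c..c + int n}. 1 / (t + real_of_int (m - c))^2) \<le> 1/t^2 + 1/t - 1/(t + real n)"
proof (induction n)
  case 0
  then show ?case using t by simp
next
  case (Suc n)
  have eq: "{c..c + int (Suc n)} = insert (c + int (Suc n)) {c..c + int n}" by auto
  have "(\<Sum>m\<in>{c..c + int (Suc n)}. 1 / (t + real_of_int (m - c))^2)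
      = 1 / (t + real (Suc n))^2 + (\<Sum>m\<in>{c..c + int n}. 1 / (t + real_of_int (m - c))^2)"
    unfolding eq by (subst sum.insert) auto
  also have "\<dots> \<le> 1 / (t + real (Suc n))^2 + (1/t^2 + 1/t - 1/(t + real n))"
    using Suc.IH by simp
  also have "\<dots> \<le> 1/t^2 + 1/t - 1/(t + real (Suc n))"
  proof -
    define a where "a = t + real n"
    have a: "a > 0" using t by (simp add: a_def)
    have e1: "1/a - 1/(a+1) = 1 / (a * (a+1))" using a by (simp add: field_simps)
    have "a * (a+1) \<le> (a+1)^2" using a by (simp add: power2_eq_square)
    then have "1 / (a + 1)^2 \<le> 1 / (a * (a+1))" using a by (intro divide_left_mono) auto
    then have "1 / (a + 1)^2 \<le> 1/a - 1/(a+1)" using e1 by simp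
    moreover have ts: "t + real (Suc n) = a + 1" by (simp add: a_def)
    moreover have ta: "t + real n = a" by (simp add: a_def)
    ultimately show ?thesis by (simp only: ts ta)
  qed
  finally show ?case .
qed




lemma final_arith:
  fixes s t :: real assumes t: "t > s/2" and s: "s \<ge> 2"
  shows "(1/t^2 + 1/t)/3 \<le> 2/s"
proof -
  have tpos: "t > 0" using t s by linarith
  have spos: "s > 0" using s by linarith
  have a: "1/t \<le> 2/s" using t tpos spos by (simp add: field_simps)
  have "1/t^2 = (1/t)^2" by (simp add: power_divide)
  also have "\<dots> \<le> (2/s)^2" using a tpos by (intro power_mono) auto
  also have "\<dots> = (2/s) * (2/s)" by (simp add: power2_eq_square)
  also have "\<dots> \<le> 1 * (2/s)" using s spos by (intro mult_right_mono) auto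
  finally have b: "1/t^2 \<le> 2/s" by simp
  have "2/s + 2/s \<le> 6/s" using spos by (simp add: field_simps)
  then show ?thesis using a b by simp
qed

lemma Q_bound:
  fixes L :: nat and e0 \<Delta> \<omega> lam :: real
  assumes L4: "L \<ge> 4"
    and Dgt: "\<Delta> > 1 / sqrt (real L)"
    and wdef: "\<omega> = \<Delta> - 1 / sqrt (real L)"
    and win: "{e0 - \<Delta>/2 .. e0 + \<Delta>/2} \<subseteq> {0 .. 1/2}"
    and intlo: "(e0 - \<omega>/2) * real L \<in> \<int>"
    and inthi: "(e0 + \<omega>/2) * real L \<in> \<int>"
    and lam0: "0 \<le> lam" and lam2: "lam \<le> 1/2"
    and out: "\<not> (e0 - \<Delta>/2 \<le> lam \<and> lam \<le> e0 + \<Delta>/2)"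
  shows "Qfun L e0 \<omega> lam \<le> 2 / sqrt (real L)"
proof -
  define s where "s = sqrt (real L)"
  have s2: "s \<ge> 2" unfolding s_def using L4 real_sqrt_le_mono[of 4 "real L"] by simp
  have spos: "s > 0" using s2 by simp
  have Ls: "real L = s^2" unfolding s_def by simp
  have Lpos: "real L > 0" using L4 by simp
  have L0: "L > 0" using L4 by simp
  have Dpos: "\<Delta> > 0" using Dgt spos s_def by (metis less_trans zero_less_divide_1_iff)
  have m1: "e0 - \<Delta>/2 \<in> {0..1/2}" using Dpos by (intro subsetD[OF win]) simp
  have m2: "e0 + \<Delta>/2 \<in> {0..1/2}" using Dpos by (intro subsetD[OF win]) simp
  have lo0: "e0 - \<Delta>/2 \<ge> 0" and hi: "e0 + \<Delta>/2 \<le> 1/2" using m1 m2 by auto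
  have gap: "\<Delta>/2 - \<omega>/2 = 1 / (2 * s)" by (simp add: wdef s_def field_simps)
  have Lgap: "real L * (1 / (2 * s)) = s/2" using spos by (simp add: Ls power2_eq_square)
  obtain ai where ai: "(e0 - \<omega>/2) * real L = of_int ai" using intlo by (metis Ints_cases)
  obtain ci where ci: "(e0 + \<omega>/2) * real L = of_int ci" using inthi by (metis Ints_cases)
  have Q: "Qfun L e0 \<omega> lam = (\<Sum>m\<in>{ai..ci}. (sincL L (lam - real_of_int m / real L))^2)"
    unfolding Qfun_def ai ci by simp
  have mrange: "e0 - \<omega>/2 \<le> real_of_int m / real L \<and> real_of_int m / real L \<le> e0 + \<omega>/2"
    if "m \<in> {ai..ci}" for m
  proof -
    have "of_int ai \<le> real_of_int m" "real_of_int m \<le> of_int ci" using that by auto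
    then show ?thesis using Lpos ai ci by (simp add: field_simps)
  qed
  have wD: "\<omega> < \<Delta>" using wdef spos s_def by simp
  have hterm: "(sincL L (lam - real_of_int m / real L))^2 \<le> 1 / (3 * (real L * lam - real_of_int m)^2)"
    if m: "m \<in> {ai..ci}" for m
  proof -
    define x where "x = lam - real_of_int m / real L"
    have x0: "x \<noteq> 0" using mrange[OF m] out wD by (auto simp: x_def)
    have q: "0 \<le> real_of_int m / real L" "real_of_int m / real L \<le> 1/2"
      using mrange[OF m] lo0 hi wD by linarith+
    have x2: "\<bar>x\<bar> \<le> 1/2" unfolding abs_le_iff x_def using q lam0 lam2 by linarith
    have "real L * x = real L * lam - real_of_int m" using Lpos by (simp add: x_def field_simps)
    then show ?thesis using sinc_bound[OF L0 x0 x2] by (simp add: x_def)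
  qed
  have sum_up: "(\<Sum>m\<in>{ai..ci}. 1 / (t + real_of_int (ci - m))^2) \<le> 1/t^2 + 1/t" if t: "t > 0" for t
  proof (cases "ai \<le> ci")
    case True
    define n where "n = nat (ci - ai)"
    have eq: "{ai..ci} = {ci - int n..ci}" using True by (simp add: n_def)
    have "1/(t + real n) \<ge> 0" using t by simp
    then show ?thesis unfolding eq using tele_up[OF t, of ci n] by linarith
  next
    case False
    then show ?thesis using t by simp
  qed
  have sum_down: "(\<Sum>m\<in>{ai..ci}. 1 / (t + real_of_int (m - ai))^2) \<le> 1/t^2 + 1/t" if t: "t > 0" for t
  proof (cases "ai \<le> ci")
    case True
    define n where "n = nat (ci - ai)"
    have eq: "{ai..ci} = {ai..ai + int n}" using True by (simp add: n_def)
    have "1/(t + real n) \<ge> 0" using t by simp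
    then show ?thesis unfolding eq using tele_down[OF t, of ai n] by linarith
  next
    case False
    then show ?thesis using t by simp
  qed
  show ?thesis
  proof (cases "lam > e0 + \<Delta>/2")
    case True
    define t where "t = real L * lam - of_int ci"
    have te: "t = real L * (lam - (e0 + \<omega>/2))" using ci by (simp add: t_def algebra_simps)
    have h: "lam - (e0 + \<omega>/2) > 1 / (2 * s)" using True gap by linarith
    have "t > real L * (1 / (2 * s))" unfolding te by (rule mult_strict_left_mono[OF h Lpos])
    then have ts: "t > s/2" using Lgap by simp
    then have tpos: "t > 0" using spos by linarith
    have "Qfun L e0 \<omega> lam \<le> (\<Sum>m\<in>{ai..ci}. 1 / (3 * (real L * lam - real_of_int m)^2))"
      unfolding Q by (intro sum_mono hterm)
    also have "\<dots> = (\<Sum>m\<in>{ai..ci}. 1 / (t + real_of_int (ci - m))^2) / 3"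
      unfolding sum_divide_distrib by (intro sum.cong refl) (simp add: t_def)
    also have "\<dots> \<le> (1/t^2 + 1/t)/3" using sum_up[OF tpos] by simp
    also have "\<dots> \<le> 2/s" by (rule final_arith[OF ts s2])
    finally show ?thesis by (simp add: s_def)
  next
    case False
    then have low: "lam < e0 - \<Delta>/2" using out by linarith
    define t where "t = of_int ai - real L * lam"
    have te: "t = real L * ((e0 - \<omega>/2) - lam)" using ai by (simp add: t_def algebra_simps)
    have h: "(e0 - \<omega>/2) - lam > 1 / (2 * s)" using low gap by linarith
    have "t > real L * (1 / (2 * s))" unfolding te by (rule mult_strict_left_mono[OF h Lpos])
    then have ts: "t > s/2" using Lgap by simp
    then have tpos: "t > 0" using spos by linarith
    have "Qfun L e0 \<omega> lam \<le> (\<Sum>m\<in>{ai..ci}. 1 / (3 * (real L * lam - real_of_int m)^2))"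
      unfolding Q by (intro sum_mono hterm)
    also have "\<dots> = (\<Sum>m\<in>{ai..ci}. 1 / (t + real_of_int (m - ai))^2) / 3"
      unfolding sum_divide_distrib
    proof (intro sum.cong refl)
      fix m
      have "(real L * lam - real_of_int m)^2 = (t + real_of_int (m - ai))^2"
        by (simp add: t_def power2_eq_square algebra_simps)
      then show "1 / (3 * (real L * lam - real_of_int m)^2) = 1 / (t + real_of_int (m - ai))^2 / 3"
        by simp
    qed
    also have "\<dots> \<le> (1/t^2 + 1/t)/3" using sum_down[OF tpos] by simp
    also have "\<dots> \<le> 2/s" by (rule final_arith[OF ts s2])
    finally show ?thesis by (simp add: s_def)
  qed
qed




theorem mainTheorem6:
  fixes H :: "complex^'n^'n" and L :: nat and e0 \<Delta> \<omega> :: real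
  assumes herm: "hermitian H"
    and spec: "\<And>v c. v \<noteq> 0 \<Longrightarrow> H *v v = c *s v \<Longrightarrow> 0 \<le> Re c \<and> Re c \<le> 1/2"
    and L4: "L \<ge> 4"
    and Dgt: "\<Delta> > 1 / sqrt (real L)"
    and wdef: "\<omega> = \<Delta> - 1 / sqrt (real L)"
    and wlt: "\<omega> < 1"
    and win: "{e0 - \<Delta>/2 .. e0 + \<Delta>/2} \<subseteq> {0 .. 1/2}"
    and intlo: "(e0 - \<omega>/2) * real L \<in> \<int>"
    and inthi: "(e0 + \<omega>/2) * real L \<in> \<int>"
  shows "opnorm (mfun (Qfun L e0 \<omega>) H - PiD H e0 \<Delta> ** mfun (Qfun L e0 \<omega>) H)
           \<le> 2 / sqrt (real L)"
proof -
  obtain B where one: "ONE H B" and exp0: "\<forall>x. x = (\<Sum>b\<in>B. cinner b x *s b)"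
    using eigenbasis[OF herm] by blast
  have exp: "\<And>x. x = (\<Sum>b\<in>B. cinner b x *s b)" using exp0 by blast
  define lam where "lam = (\<lambda>b. SOME l::real. H *v b = complex_of_real l *s b)"
  have lamP: "H *v b = complex_of_real (lam b) *s b" if b: "b \<in> B" for b
  proof -
    have "\<exists>l::real. H *v b = complex_of_real l *s b" using one b unfolding ONE_def by blast
    then show ?thesis unfolding lam_def by (rule someI_ex)
  qed
  have lamR: "0 \<le> lam b \<and> lam b \<le> 1/2" if b: "b \<in> B" for b
  proof -
    have "cinner b b = 1" using one b unfolding ONE_def by blast
    then have "b \<noteq> 0" by auto
    from spec[OF this lamP[OF b]] show ?thesis by simp
  qed
  define Q where "Q = Qfun L e0 \<omega>"
  define g where "g = (\<lambda>b. if e0 - \<Delta>/2 \<le> lam b \<and> lam b \<le> e0 + \<Delta>/2 then 1 else (0::real))"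
  define C where "C = 2 / sqrt (real L)"
  have C0: "C \<ge> 0" by (simp add: C_def)
  have M: "mfun Q H = opB B (\<lambda>b. Q (lam b))" by (rule mfun_eq[OF herm one exp lamP])
  have P: "PiD H e0 \<Delta> = opB B g" unfolding g_def by (rule PiD_eq[OF herm one exp lamP])
  have A: "mfun Q H - PiD H e0 \<Delta> ** mfun Q H = opB B (\<lambda>b. Q (lam b) - g b * Q (lam b))"
    unfolding M P opB_mult[OF one] opB_diff ..
  have bd: "\<bar>Q (lam b) - g b * Q (lam b)\<bar> \<le> C" if b: "b \<in> B" for b
  proof (cases "e0 - \<Delta>/2 \<le> lam b \<and> lam b \<le> e0 + \<Delta>/2")
    case True then show ?thesis using C0 by (simp add: g_def)
  next
    case False
    have Q0: "Q (lam b) \<ge> 0" unfolding Q_def Qfun_def by (intro sum_nonneg) simp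
    have "Q (lam b) \<le> C" unfolding Q_def C_def
      using Q_bound[OF L4 Dgt wdef win intlo inthi _ _ False] lamR[OF b] by blast
    then show ?thesis using False Q0 by (simp add: g_def)
  qed
  have "opnorm (mfun Q H - PiD H e0 \<Delta> ** mfun Q H) \<le> C"
    unfolding opnorm_def A
    by (rule onorm_le, rule opB_norm[OF one exp bd C0])
  then show ?thesis by (simp add: Q_def C_def)
qed



end
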